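(* Let $b\ge2$ be an integer and $\mathbf{x}=x_1x_2\ldots$ an infinite word over $\{0,1,\ldots,b-1\}$ which is not eventually periodic. Then the irrational number $\xi_{\mathbf{x},b}=\sum_{k\ge1}x_k b^{-k}$ satisfies $$\mu(\xi_{\mathbf{x},b})\ge\frac{\mathrm{rep}(\mathbf{x})}{\mathrm{rep}(\mathbf{x})-1},$$ where the right-hand side is $+\infty$ if $\mathrm{rep}(\mathbf{x})=1$ (and is $1$ if $\mathrm{rep}(\mathbf{x})=+\infty$).
   Context: With $x_i^j=x_i\cdots x_j$, $r(n,\mathbf{x})=\min\{m\ge1:\ x_i^{i+n-1}=x_{m-n+1}^{m}\text{ for some } 1\le i\le m-n\}$ and $\mathrm{rep}(\mathbf{x})=\liminf_{n\to\infty}r(n,\mathbf{x})/n$. The irrationality exponent $\mu(\xi)$ of a real number $\xi$ is the supremum of the real numbers $\mu$ such that $|\xi-p/q|<q^{-\mu}$ has infinitely many solutions in rationals $p/q$. *)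

theory Defs
  imports "HOL-Analysis.Analysis"
begin

text \<open>Infinite words are functions x :: nat => nat, indexed from 1 as in the paper
  (the value x 0 is irrelevant).\<close>

definition eventually_periodic :: "(nat \<Rightarrow> nat) \<Rightarrow> bool" where
  "eventually_periodic x \<longleftrightarrow> (\<exists>p>0. \<exists>N\<ge>1. \<forall>k\<ge>N. x (k + p) = x k)"

definition rfun :: "nat \<Rightarrow> (nat \<Rightarrow> nat) \<Rightarrow> nat" where
  "rfun n x = (LEAST m. m \<ge> 1 \<and> (\<exists>i. 1 \<le> i \<and> i + n \<le> m \<and>
        (\<forall>j<n. x (i + j) = x (m + 1 - n + j))))"

definition rep :: "(nat \<Rightarrow> nat) \<Rightarrow> ereal" where
  "rep x = liminf (\<lambda>n. ereal (real (rfun n x) / real n))"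

definition irrationality_exponent :: "real \<Rightarrow> ereal" where
  "irrationality_exponent \<xi> = Sup (ereal ` {\<mu>::real.
     infinite {(p::int, q::int). q > 0 \<and> coprime p q \<and>
        \<bar>\<xi> - real_of_int p / real_of_int q\<bar> < real_of_int q powr (- \<mu>)}})"

definition rep_bound :: "ereal \<Rightarrow> ereal" where
  "rep_bound \<rho> = (if \<rho> = \<infinity> then 1 else if \<rho> = 1 then \<infinity>
     else ereal (real_of_ereal \<rho> / (real_of_ereal \<rho> - 1)))"

end

theory Submission
  imports Defs
begin



definition Tl :: "nat \<Rightarrow> (nat\<Rightarrow>nat) \<Rightarrow> nat \<Rightarrow> real" where
  "Tl b x k = (\<Sum>j. real (x (k+j+1)) / real b ^ (j+1))"

lemma geo1:
  assumes "b \<ge> (2::nat)"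
  shows "(\<lambda>j. real (b - 1) / real b ^ (j+1)) sums 1"
proof -
  have c: "norm (1 / real b) < 1" using assms by auto
  have "(\<lambda>j. (1/real b)^j) sums (1 / (1 - 1/real b))" using geometric_sums[OF c] .
  then have "(\<lambda>j. (real (b-1)/real b) * (1/real b)^j) sums ((real (b-1)/real b) * (1 / (1 - 1/real b)))"
    by (rule sums_mult)
  moreover have "(real (b-1)/real b) * (1 / (1 - 1/real b)) = 1"
    using assms by (simp add: of_nat_diff field_simps)
  moreover have "\<And>j. (real (b-1)/real b) * (1/real b)^j = real (b - 1) / real b ^ (j+1)"
    by (simp add: power_one_over field_simps)
  ultimately show ?thesis using assms by simp
qed

lemma Tl_summable:
  assumes "b \<ge> 2" "\<forall>k\<ge>1. x k < b"
  shows "summable (\<lambda>j. real (x (k+j+1)) / real b ^ (j+1))"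
proof (rule summable_comparison_test'[OF sums_summable[OF geo1[OF assms(1)]]])
  fix j show "norm (real (x (k+j+1)) / real b ^ (j+1)) \<le> real (b - 1) / real b ^ (j+1)"
    using assms(2)[rule_format, of "k+j+1"] assms(1)
    by (auto intro!: divide_right_mono)
qed

lemma Tl_bounds:
  assumes "b \<ge> 2" "\<forall>k\<ge>1. x k < b"
  shows "0 \<le> Tl b x k" "Tl b x k \<le> 1"
proof -
  show "0 \<le> Tl b x k" unfolding Tl_def
    by (intro suminf_nonneg Tl_summable assms) auto
  show "Tl b x k \<le> 1" unfolding Tl_def
    apply (rule sums_le[OF _ summable_sums[OF Tl_summable[OF assms]] geo1[OF assms(1)]])
  proof -
    fix j
    have "x (k+j+1) \<le> b - 1" using assms(2)[rule_format, of "k+j+1"] by auto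
    then have "real (x (k+j+1)) \<le> real (b - 1)" by linarith
    then show "real (x (k+j+1)) / real b ^ (j+1) \<le> real (b - 1) / real b ^ (j+1)"
      by (auto intro!: divide_right_mono)
  qed
qed

lemma Tl_split:
  assumes "b \<ge> 2" "\<forall>k\<ge>1. x k < b"
  shows "Tl b x k = (\<Sum>j<n. real (x (k+j+1)) / real b ^ (j+1)) + Tl b x (k+n) / real b ^ n"
proof -
  have s: "summable (\<lambda>j. real (x (k+n+j+1)) / real b ^ (j+1))" by (rule Tl_summable[OF assms])
  have "Tl b x k = (\<Sum>j. real (x (k+(j+n)+1)) / real b ^ ((j+n)+1)) + (\<Sum>j<n. real (x (k+j+1)) / real b ^ (j+1))"
    unfolding Tl_def by (rule suminf_split_initial_segment[OF Tl_summable[OF assms]])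
  also have "(\<lambda>j. real (x (k+(j+n)+1)) / real b ^ ((j+n)+1)) = (\<lambda>j. (real (x (k+n+j+1)) / real b ^ (j+1)) / real b ^ n)"
    by (rule ext) (simp add: power_add algebra_simps)
  also have "(\<Sum>j. (real (x (k+n+j+1)) / real b ^ (j+1)) / real b ^ n) = Tl b x (k+n) / real b ^ n"
    unfolding Tl_def by (rule suminf_divide[OF s])
  finally show ?thesis by simp
qed

lemma Tl_int:
  assumes "b \<ge> 2" "\<forall>k\<ge>1. x k < b"
  shows "real b ^ n * Tl b x k = real (\<Sum>j<n. x (k+j+1) * b ^ (n - 1 - j)) + Tl b x (k+n)"
proof -
  have "real b ^ n * (\<Sum>j<n. real (x (k+j+1)) / real b ^ (j+1)) = (\<Sum>j<n. real (x (k+j+1) * b ^ (n - 1 - j)))"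
    unfolding sum_distrib_left
  proof (rule sum.cong)
    fix j assume "j \<in> {..<n}"
    then have "n = (n - 1 - j) + (j+1)" by auto
    then have "real b ^ n = real b ^ (n - 1 - j) * real b ^ (j+1)" by (metis power_add)
    then show "real b ^ n * (real (x (k+j+1)) / real b ^ (j+1)) = real (x (k+j+1) * b ^ (n - 1 - j))"
      using assms(1) by simp
  qed simp
  then show ?thesis using Tl_split[OF assms, of k n] assms(1)
    by (simp add: distrib_left)
qed



lemma Tl_strict:
  assumes b: "b \<ge> 2" and d: "\<forall>k\<ge>1. x k < b" and np: "\<not> eventually_periodic x"
  shows "0 < Tl b x k \<and> Tl b x k < 1"
proof -
  have s: "summable (\<lambda>j. real (x (k+j+1)) / real b ^ (j+1))" by (rule Tl_summable[OF b d])
  have ne0: "Tl b x k \<noteq> 0"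
  proof
    assume "Tl b x k = 0"
    then have "\<forall>j. real (x (k+j+1)) / real b ^ (j+1) = 0"
      unfolding Tl_def using suminf_eq_zero_iff[OF s] by simp
    then have z: "\<forall>j. x (k+j+1) = 0" using b by simp
    have "\<forall>K\<ge>k+1. x (K+1) = x K"
    proof (intro allI impI)
      fix K assume "k+1 \<le> K"
      then show "x (K+1) = x K" using z[rule_format, of "K - k - 1"] z[rule_format, of "K - k"] by simp
    qed
    then have "eventually_periodic x" unfolding eventually_periodic_def
      by (intro exI[of _ 1] conjI exI[of _ "k+1"]) auto
    then show False using np by simp
  qed
  have ne1: "Tl b x k \<noteq> 1"
  proof
    assume T1: "Tl b x k = 1"
    define g where "g j = real (b - 1) / real b ^ (j+1) - real (x (k+j+1)) / real b ^ (j+1)" for j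
    have gs: "g sums (1 - 1)" unfolding g_def
      using sums_diff[OF geo1[OF b] summable_sums[OF s]] T1 unfolding Tl_def by simp
    have gn: "0 \<le> g j" for j
    proof -
      have "x (k+j+1) \<le> b - 1" using d[rule_format, of "k+j+1"] by auto
      then have "real (x (k+j+1)) \<le> real (b - 1)" by linarith
      then show ?thesis unfolding g_def by (auto intro!: divide_right_mono)
    qed
    have "\<forall>j. g j = 0" using suminf_eq_zero_iff[OF sums_summable[OF gs] gn] sums_unique[OF gs] by simp
    then have "\<forall>j. real (x (k+j+1)) = real (b - 1)" unfolding g_def using b by (simp add: diff_divide_distrib[symmetric])
    then have z: "\<forall>j. x (k+j+1) = b - 1" by (metis of_nat_eq_iff)
    have "\<forall>K\<ge>k+1. x (K+1) = x K"
    proof (intro allI impI)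
      fix K assume "k+1 \<le> K"
      then show "x (K+1) = x K" using z[rule_format, of "K - k - 1"] z[rule_format, of "K - k"] by simp
    qed
    then have "eventually_periodic x" unfolding eventually_periodic_def
      by (intro exI[of _ 1] conjI exI[of _ "k+1"]) auto
    then show False using np by simp
  qed
  show ?thesis using ne0 ne1 Tl_bounds[OF b d, of k] by auto
qed

lemma Tl_step:
  assumes b: "b \<ge> 2" and d: "\<forall>k\<ge>1. x k < b" and np: "\<not> eventually_periodic x"
  shows "int (x (k+1)) = \<lfloor>real b * Tl b x k\<rfloor>" "Tl b x (k+1) = real b * Tl b x k - real (x (k+1))"
proof -
  have "Tl b x k = real (x (k+1)) / real b + Tl b x (k+1) / real b"
    using Tl_split[OF b d, of k 1] by simp
  then show e: "Tl b x (k+1) = real b * Tl b x k - real (x (k+1))"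
    using b by (simp add: field_simps)
  show "int (x (k+1)) = \<lfloor>real b * Tl b x k\<rfloor>"
    using Tl_strict[OF b d np, of "k+1"] e by (intro floor_unique[symmetric]) auto
qed

lemma Tl_eq_shift:
  assumes b: "b \<ge> 2" and d: "\<forall>k\<ge>1. x k < b" and np: "\<not> eventually_periodic x"
    and eq: "Tl b x k = Tl b x k'"
  shows "Tl b x (k+j) = Tl b x (k'+j) \<and> x (k+j+1) = x (k'+j+1)"
proof (induction j)
  case 0
  then show ?case using Tl_step(1)[OF b d np, of k] Tl_step(1)[OF b d np, of k'] eq by simp
next
  case (Suc j)
  then have e: "Tl b x (k+Suc j) = Tl b x (k'+Suc j)"
    using Tl_step(2)[OF b d np, of "k+j"] Tl_step(2)[OF b d np, of "k'+j"] by simp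
  then show ?case using Tl_step(1)[OF b d np, of "k+Suc j"] Tl_step(1)[OF b d np, of "k'+Suc j"] by simp
qed

lemma xi_irrational:
  assumes b: "b \<ge> 2" and d: "\<forall>k\<ge>1. x k < b" and np: "\<not> eventually_periodic x"
  shows "Tl b x 0 \<notin> \<rat>"
proof
  assume "Tl b x 0 \<in> \<rat>"
  then obtain a c where c: "c > 0" and xi: "Tl b x 0 = of_int a / of_int c" by (rule Rats_cases')
  have fint: "real_of_int c * Tl b x k \<in> real_of_int ` {0..c}" for k
  proof -
    have "real b ^ k * Tl b x 0 = real (\<Sum>j<k. x (0+j+1) * b ^ (k - 1 - j)) + Tl b x (0+k)"
      by (rule Tl_int[OF b d])
    then have "real_of_int c * Tl b x k = real b ^ k * of_int a - of_int c * real (\<Sum>j<k. x (j+1) * b ^ (k - 1 - j))"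
      using xi c by (simp add: field_simps)
    also have "\<dots> = of_int (int b ^ k * a - c * int (\<Sum>j<k. x (j+1) * b ^ (k - 1 - j)))" by simp
    finally have e: "real_of_int c * Tl b x k = of_int (int b ^ k * a - c * int (\<Sum>j<k. x (j+1) * b ^ (k - 1 - j)))" .
    obtain z where e2: "real_of_int c * Tl b x k = of_int z" using e by blast
    have "0 \<le> real_of_int c * Tl b x k" "real_of_int c * Tl b x k \<le> of_int c"
      using Tl_bounds[OF b d, of k] c by auto
    then have "0 \<le> z" "z \<le> c" unfolding e2 by simp_all
    then show ?thesis unfolding e2 by (intro image_eqI[OF refl]) auto
  qed
  define A where "A = {0..nat c + 1}"
  define f where "f k = real_of_int c * Tl b x k" for k
  have "f ` A \<subseteq> real_of_int ` {0..c}" using fint unfolding f_def by auto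
  then have "card (f ` A) \<le> card (real_of_int ` {0..c})" by (intro card_mono) auto
  also have "\<dots> \<le> card {0..c}" by (rule card_image_le) auto
  also have "\<dots> = nat c + 1" using c by simp
  finally have "card A > card (f ` A)" unfolding A_def by simp
  then have "\<not> inj_on f A" by (rule pigeonhole)
  then obtain k k' where kk: "k \<noteq> k'" "f k = f k'" unfolding inj_on_def by auto
  then have eq: "Tl b x k = Tl b x k'" unfolding f_def using c by simp
  have "eventually_periodic x"
  proof -
    { fix k k' assume kl: "k < k'" and eq: "Tl b x k = Tl b x k'"
      have "\<forall>K\<ge>k+1. x (K + (k' - k)) = x K"
      proof (intro allI impI)
        fix K assume "k+1 \<le> K"
        then have idx: "k' + (K - k - 1) + 1 = K + (k' - k)" "k + (K-k-1) + 1 = K" using kl by auto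
        have "x (k + (K-k-1) + 1) = x (k' + (K-k-1) + 1)" using Tl_eq_shift[OF b d np eq, of "K - k - 1"] by blast
        then show "x (K + (k' - k)) = x K" unfolding idx by simp
      qed
      then have "eventually_periodic x" unfolding eventually_periodic_def
        using kl by (intro exI[of _ "k' - k"] conjI exI[of _ "k+1"]) auto }
    then show ?thesis using kk eq by (metis linorder_neqE_nat)
  qed
  then show False using np by simp
qed



lemma rfun_ex:
  fixes b :: nat and x :: "nat \<Rightarrow> nat"
  assumes b: "b \<ge> 2" and d: "\<forall>k\<ge>1. x k < b" and n: "n \<ge> 1"
  shows "\<exists>m. m \<ge> 1 \<and> (\<exists>i. 1 \<le> i \<and> i + n \<le> m \<and> (\<forall>j<n. x (i + j) = x (m + 1 - n + j)))"
proof -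
  define A where "A = {1..b^n+1}"
  define f where "f i = map (\<lambda>j. x (i+j)) [0..<n]" for i
  define L where "L = {xs. set xs \<subseteq> {0..<b} \<and> length xs = n}"
  have "f ` A \<subseteq> L" unfolding A_def f_def L_def using d by auto
  then have "card (f ` A) \<le> card L" unfolding L_def by (intro card_mono finite_lists_length_eq) auto
  also have "card L = b ^ n" unfolding L_def by (simp add: card_lists_length_eq)
  finally have "card A > card (f ` A)" unfolding A_def by simp
  then have "\<not> inj_on f A" by (rule pigeonhole)
  then obtain i i' where ii: "i \<in> A" "i' \<in> A" "i \<noteq> i'" "f i = f i'" unfolding inj_on_def by auto
  have main: "\<exists>m. m \<ge> 1 \<and> (\<exists>i. 1 \<le> i \<and> i + n \<le> m \<and> (\<forall>j<n. x (i + j) = x (m + 1 - n + j)))"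
    if "i \<in> A" "i' \<in> A" "i < i'" "f i = f i'" for i i'
  proof (intro exI conjI)
    show "1 \<le> i' + n - 1" using that n unfolding A_def by auto
    show "1 \<le> i" using that unfolding A_def by auto
    show "i + n \<le> i' + n - 1" using that n by auto
    show "\<forall>j<n. x (i + j) = x (i' + n - 1 + 1 - n + j)"
    proof (intro allI impI)
      fix j assume "j < n"
      then have "f i ! j = f i' ! j" using that by simp
      then have "x (i+j) = x (i'+j)" unfolding f_def using \<open>j<n\<close> by simp
      moreover have "i' + n - 1 + 1 - n + j = i' + j" using n by simp
      ultimately show "x (i + j) = x (i' + n - 1 + 1 - n + j)" by simp
    qed
  qed
  show ?thesis
  proof (cases "i < i'")
    case True then show ?thesis using main ii by blast
  next
    case False then have "i' < i" using ii by simp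
    then show ?thesis using main ii by metis
  qed
qed

lemma rfun_prop:
  fixes b :: nat and x :: "nat \<Rightarrow> nat"
  assumes b: "b \<ge> 2" and d: "\<forall>k\<ge>1. x k < b" and n: "n \<ge> 1"
  shows "rfun n x \<ge> 1 \<and> (\<exists>i. 1 \<le> i \<and> i + n \<le> rfun n x \<and> (\<forall>j<n. x (i + j) = x (rfun n x + 1 - n + j)))"
  unfolding rfun_def by (rule LeastI_ex[OF rfun_ex[OF assms]])

lemma rfun_ge:
  fixes b :: nat and x :: "nat \<Rightarrow> nat"
  assumes b: "b \<ge> 2" and d: "\<forall>k\<ge>1. x k < b" and n: "n \<ge> 1"
  shows "rfun n x \<ge> n + 1"
  using rfun_prop[OF assms] by auto

lemma approx:
  assumes b: "b \<ge> 2" and d: "\<forall>k\<ge>1. x k < b" and n: "n \<ge> 1"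
  obtains P Q :: int where "0 < Q" "real_of_int Q < real b ^ (rfun n x - n)"
     "\<bar>real_of_int Q * Tl b x 0 - real_of_int P\<bar> \<le> 1 / real b ^ n"
proof -
  define m where "m = rfun n x"
  obtain i where i: "1 \<le> i" "i + n \<le> m" "\<forall>j<n. x (i + j) = x (m + 1 - n + j)"
    using rfun_prop[OF assms] unfolding m_def by blast
  define u where "u = i - 1"
  define v where "v = m - n"
  have uv: "u < v" using i n unfolding u_def v_def by auto
  define S where "S k = (\<Sum>j<k. x (0+j+1) * b ^ (k - 1 - j))" for k
  have Sk: "real b ^ k * Tl b x 0 = real (S k) + Tl b x k" for k
    using Tl_int[OF b d, of k 0] unfolding S_def by simp
  define A where "A k = (\<Sum>j<n. real (x (k+j+1)) / real b ^ (j+1))" for k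
  have Auv: "A u = A v" unfolding A_def
  proof (rule sum.cong[OF refl])
    fix j assume "j \<in> {..<n}"
    then have "x (i + j) = x (m + 1 - n + j)" using i by auto
    moreover have "u + j + 1 = i + j" "v + j + 1 = m + 1 - n + j" using i unfolding u_def v_def by auto
    ultimately have "x (u+j+1) = x (v+j+1)" by (simp only:)
    then show "real (x (u+j+1)) / real b ^ (j+1) = real (x (v+j+1)) / real b ^ (j+1)" by simp
  qed
  have Tu: "Tl b x u = A u + Tl b x (u+n) / real b ^ n" unfolding A_def by (rule Tl_split[OF b d])
  have Tv: "Tl b x v = A v + Tl b x (v+n) / real b ^ n" unfolding A_def by (rule Tl_split[OF b d])
  have "\<bar>Tl b x (v+n) - Tl b x (u+n)\<bar> \<le> 1"
    using Tl_bounds[OF b d, of "v+n"] Tl_bounds[OF b d, of "u+n"] by auto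
  then have "\<bar>Tl b x v - Tl b x u\<bar> \<le> 1 / real b ^ n"
    unfolding Tu Tv Auv using b by (simp add: diff_divide_distrib[symmetric] abs_divide divide_right_mono)
  define Q where "Q = int b ^ v - int b ^ u"
  define P where "P = int (S v) - int (S u)"
  have bu: "b ^ u < b ^ v" using uv b by (intro power_strict_increasing) auto
  show ?thesis
  proof
    show "0 < Q" unfolding Q_def using bu by (metis of_nat_less_iff of_nat_power diff_gt_0_iff_gt)
    show "real_of_int Q < real b ^ (rfun n x - n)" unfolding Q_def v_def m_def using b by simp
    have "real_of_int Q * Tl b x 0 - real_of_int P = Tl b x v - Tl b x u"
      unfolding Q_def P_def using Sk[of u] Sk[of v] by (simp add: algebra_simps)
    then show "\<bar>real_of_int Q * Tl b x 0 - real_of_int P\<bar> \<le> 1 / real b ^ n"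
      using \<open>\<bar>Tl b x v - Tl b x u\<bar> \<le> 1 / real b ^ n\<close> by simp
  qed
qed



lemma in_S:
  fixes b :: nat and x :: "nat \<Rightarrow> nat" and \<mu> :: real
  assumes b: "b \<ge> 2" and d: "\<forall>k\<ge>1. x k < b" and np: "\<not> eventually_periodic x"
    and mu: "\<mu> > 0"
    and fr: "\<exists>\<^sub>F n in sequentially. n \<ge> 1 \<and> \<mu> * (real (rfun n x) - real n) < real (rfun n x)"
  shows "infinite {(p::int, q::int). q > 0 \<and> coprime p q \<and>
        \<bar>Tl b x 0 - real_of_int p / real_of_int q\<bar> < real_of_int q powr (- \<mu>)}"
    (is "infinite ?F")
proof
  let ?xi = "Tl b x 0"
  assume fin: "finite ?F"
  define D where "D = insert 1 ((\<lambda>(p,q). \<bar>?xi - real_of_int p / real_of_int q\<bar>) ` ?F)"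
  define \<delta> where "\<delta> = Min D"
  have irr: "?xi \<notin> \<rat>" by (rule xi_irrational[OF b d np])
  have Dpos: "\<forall>t\<in>D. 0 < t"
  proof
    fix t assume "t \<in> D"
    then consider "t = 1" | p q where "t = \<bar>?xi - real_of_int p / real_of_int q\<bar>" unfolding D_def by auto
    then show "0 < t"
    proof cases
      case 2
      have "real_of_int p / real_of_int q \<in> \<rat>" by simp
      then have "?xi \<noteq> real_of_int p / real_of_int q" using irr by auto
      then show ?thesis using 2 by simp
    qed simp
  qed
  have finD: "finite D" unfolding D_def using fin by simp
  have dpos: "0 < \<delta>" unfolding \<delta>_def using Dpos finD by (simp add: D_def)
  have hd: "\<delta> \<le> \<bar>?xi - real_of_int p / real_of_int q\<bar>" if "(p,q) \<in> ?F" for p q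
    unfolding \<delta>_def using finD that by (intro Min_le) (auto simp: D_def)
  have "eventually (\<lambda>n. (1 / real b) ^ n < \<delta>) sequentially"
    using b by (intro order_tendstoD(2)[OF LIMSEQ_power_zero dpos]) auto
  then have "\<exists>\<^sub>F n in sequentially. (n \<ge> 1 \<and> \<mu> * (real (rfun n x) - real n) < real (rfun n x)) \<and> (1 / real b) ^ n < \<delta>"
    by (rule frequently_eventually_frequently[OF fr])
  then obtain n where n: "n \<ge> 1" "\<mu> * (real (rfun n x) - real n) < real (rfun n x)" "(1 / real b) ^ n < \<delta>"
    by (auto dest: frequently_ex)
  define E where "E = 1 / real b ^ n"
  have Ed: "E < \<delta>" using n(3) unfolding E_def by (simp add: power_one_over)
  obtain P Q :: int where PQ: "0 < Q" "real_of_int Q < real b ^ (rfun n x - n)"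
     "\<bar>real_of_int Q * ?xi - real_of_int P\<bar> \<le> E"
    using approx[OF b d n(1)] unfolding E_def by blast
  define g where "g = gcd P Q"
  define p where "p = P div g"
  define q where "q = Q div g"
  have gpos: "g > 0" unfolding g_def using PQ(1) by simp
  have Pe: "P = p * g" unfolding p_def g_def by simp
  have Qe: "Q = q * g" unfolding q_def g_def by simp
  have qpos: "q > 0" using Qe gpos PQ(1) by (metis zero_less_mult_pos2)
  have qQ: "q \<le> Q" using Qe gpos qpos by (simp add: mult_le_cancel_left1)
  have cop: "coprime p q" unfolding p_def q_def g_def using PQ(1) by (intro div_gcd_coprime) simp
  have frac: "real_of_int p / real_of_int q = real_of_int P / real_of_int Q"
    unfolding Pe Qe using gpos by simp
  have err: "\<bar>?xi - real_of_int p / real_of_int q\<bar> \<le> E / real_of_int Q"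
  proof -
    have "\<bar>?xi - real_of_int P / real_of_int Q\<bar> = \<bar>real_of_int Q * ?xi - real_of_int P\<bar> / real_of_int Q"
      using PQ(1) by (simp add: field_simps abs_divide)
    then show ?thesis unfolding frac using PQ(1,3) by (simp add: divide_right_mono)
  qed
  have Epos: "0 < E" unfolding E_def using b by simp
  have Q1: "1 \<le> real_of_int Q" using PQ(1) by simp
  have key: "E < real_of_int Q powr (1 - \<mu>)"
  proof (cases "\<mu> \<le> 1")
    case True
    have "1 \<le> real_of_int Q powr (1 - \<mu>)" using Q1 True by (intro ge_one_powr_ge_zero) auto
    moreover have "E < 1" unfolding E_def using b n(1)
      by (simp add: one_less_power)
    ultimately show ?thesis by simp
  next
    case False
    define v where "v = rfun n x - n"
    have rge: "rfun n x \<ge> n + 1" by (rule rfun_ge[OF b d n(1)])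
    have rv: "real v = real (rfun n x) - real n" unfolding v_def using rge by simp
    have bp: "real b powr real k = real b ^ k" for k using b by (simp add: powr_realpow)
    have "(real b ^ v) powr (1 - \<mu>) < real_of_int Q powr (1 - \<mu>)"
      using False PQ(1,2) unfolding v_def by (intro powr_less_mono2_neg) auto
    moreover have "(real b ^ v) powr (1 - \<mu>) = real b powr (real v * (1 - \<mu>))"
      unfolding bp[symmetric] by (simp add: powr_powr)
    moreover have "E = real b powr (- real n)"
      unfolding E_def using b by (simp add: powr_minus bp powr_realpow divide_inverse)
    moreover have "real b powr (- real n) \<le> real b powr (real v * (1 - \<mu>))"
    proof (rule powr_mono)
      have "\<mu> * real v < real (rfun n x)" using n(2) unfolding rv .
      moreover have "real v * (1 - \<mu>) = real v - \<mu> * real v" by (simp add: algebra_simps)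
      ultimately show "- real n \<le> real v * (1 - \<mu>)" using rv by linarith
    qed (use b in auto)
    ultimately show ?thesis by simp
  qed
  have eq: "real_of_int Q powr (- \<mu>) = real_of_int Q powr (1 - \<mu>) / real_of_int Q"
    using Q1 powr_diff[of "real_of_int Q" "1 - \<mu>" 1] by simp
  have "E / real_of_int Q < real_of_int Q powr (- \<mu>)"
    unfolding eq using key Q1 by (simp add: divide_strict_right_mono)
  also have "\<dots> \<le> real_of_int q powr (- \<mu>)"
    using mu qpos qQ by (intro powr_mono2') auto
  finally have "(p, q) \<in> ?F" using err qpos cop by auto
  then have "\<delta> \<le> \<bar>?xi - real_of_int p / real_of_int q\<bar>" by (rule hd)
  moreover have "E / real_of_int Q \<le> E" using Epos Q1 by (simp add: divide_le_eq)
  ultimately show False using err Ed by linarith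
qed



theorem theorem4p2:
  fixes b :: nat and x :: "nat \<Rightarrow> nat"
  assumes "b \<ge> 2"
    and "\<forall>k\<ge>1. x k < b"
    and "\<not> eventually_periodic x"
  shows "irrationality_exponent (\<Sum>k. real (x (k + 1)) / real b ^ (k + 1))
           \<ge> rep_bound (rep x)"
proof -
  note b = assms(1) and d = assms(2) and np = assms(3)
  have xi: "(\<Sum>k. real (x (k + 1)) / real b ^ (k + 1)) = Tl b x 0" unfolding Tl_def by simp
  define S where "S = {\<mu>::real. infinite {(p::int, q::int). q > 0 \<and> coprime p q \<and>
        \<bar>Tl b x 0 - real_of_int p / real_of_int q\<bar> < real_of_int q powr (- \<mu>)}}"
  have IE: "irrationality_exponent (\<Sum>k. real (x (k + 1)) / real b ^ (k + 1)) = Sup (ereal ` S)"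
    unfolding xi irrationality_exponent_def S_def ..
  have mem: "ereal \<mu> \<le> Sup (ereal ` S)"
    if "\<mu> > 0" "\<exists>\<^sub>F n in sequentially. n \<ge> 1 \<and> \<mu> * (real (rfun n x) - real n) < real (rfun n x)" for \<mu>
  proof -
    have "\<mu> \<in> S" unfolding S_def using in_S[OF b d np that] by simp
    then show ?thesis by (intro Sup_upper) auto
  qed
  have rge: "rfun n x \<ge> n + 1" if "n \<ge> 1" for n by (rule rfun_ge[OF b d that])
  have evn: "eventually (\<lambda>n. n \<ge> (1::nat)) sequentially" by (rule eventually_ge_at_top)
  have small: "ereal \<mu> \<le> Sup (ereal ` S)" if "0 < \<mu>" "\<mu> \<le> 1" for \<mu>
  proof (rule mem[OF that(1)])
    have "eventually (\<lambda>n. n \<ge> 1 \<and> \<mu> * (real (rfun n x) - real n) < real (rfun n x)) sequentially"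
      using evn
    proof eventually_elim
      case (elim n)
      have r: "real (rfun n x) \<ge> real n + 1" using rge[OF elim] by simp
      have "\<mu> * (real (rfun n x) - real n) \<le> 1 * (real (rfun n x) - real n)"
        using that r by (intro mult_right_mono) auto
      moreover have "real n \<ge> 1" using elim by simp
      ultimately have "\<mu> * (real (rfun n x) - real n) < real (rfun n x)" using r by argo
      then show ?case using elim by simp
    qed
    then show "\<exists>\<^sub>F n in sequentially. n \<ge> 1 \<and> \<mu> * (real (rfun n x) - real n) < real (rfun n x)"
      by (rule eventually_frequently[rotated]) simp
  qed
  have rho1: "1 \<le> rep x" unfolding rep_def
  proof (rule Liminf_bounded)
    show "\<forall>\<^sub>F n in sequentially. 1 \<le> ereal (real (rfun n x) / real n)"
      using evn
    proof eventually_elim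
      case (elim n)
      then have "real n \<le> real (rfun n x)" using rge[OF elim] by simp
      then show ?case using elim by simp
    qed
  qed
  show ?thesis unfolding IE
  proof (rule dense_le)
    fix z assume z: "z < rep_bound (rep x)"
    show "z \<le> Sup (ereal ` S)"
    proof (cases z)
      case MInf then show ?thesis by simp
    next
      case PInf then show ?thesis using z by simp
    next
      case (real y)
      show ?thesis
      proof (cases "y \<le> 1")
        case True
        show ?thesis
        proof (cases "y \<le> 0")
          case True
          then have "ereal y \<le> ereal (1/2)" by simp
          also have "\<dots> \<le> Sup (ereal ` S)" by (rule small) auto
          finally show ?thesis using real by simp
        next
          case False
          then show ?thesis using small[of y] \<open>y \<le> 1\<close> real by simp
        qed
      next
        case False
        then have y1: "y > 1" by simp
        define c where "c = y / (y - 1)"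
        have c1: "c > 1" unfolding c_def using y1 by (simp add: field_simps)
        have rc: "rep x < ereal c"
        proof (cases "rep x = 1")
          case True then show ?thesis using c1 by simp
        next
          case False
          have ninf: "rep x \<noteq> \<infinity>"
          proof
            assume "rep x = \<infinity>"
            then have "z < 1" using z unfolding rep_bound_def by simp
            then show False using real y1 by simp
          qed
          obtain r where r: "rep x = ereal r" using ninf rho1 by (cases "rep x") auto
          have r1: "r > 1" using rho1 False r by simp
          have "y < r / (r - 1)" using z real r False unfolding rep_bound_def by simp
          then have "y * (r - 1) < r" using r1 by (simp add: field_simps)
          then have "r * (y - 1) < y" by (simp add: algebra_simps)
          then have "r < c" unfolding c_def using y1 by (simp add: field_simps)
          then show ?thesis using r by simp
        qed
        have "\<not> (ereal c \<le> rep x)" using rc by simp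
        then obtain w where w: "w < ereal c" "\<not> eventually (\<lambda>n. w < ereal (real (rfun n x) / real n)) sequentially"
          unfolding rep_def le_Liminf_iff by auto
        have "\<exists>\<^sub>F n in sequentially. ereal (real (rfun n x) / real n) \<le> w"
          using w(2) unfolding frequently_def by (simp add: not_le)
        then have "\<exists>\<^sub>F n in sequentially. ereal (real (rfun n x) / real n) < ereal c"
          by (rule frequently_elim1) (erule le_less_trans[OF _ w(1)])
        then have "\<exists>\<^sub>F n in sequentially. ereal (real (rfun n x) / real n) < ereal c \<and> n \<ge> 1"
          using evn by (rule frequently_eventually_frequently)
        then have "\<exists>\<^sub>F n in sequentially. n \<ge> 1 \<and> y * (real (rfun n x) - real n) < real (rfun n x)"
        proof (rule frequently_elim1)
          fix n assume a: "ereal (real (rfun n x) / real n) < ereal c \<and> n \<ge> 1"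
          then have "real (rfun n x) / real n < c" by simp
          then have "real (rfun n x) < c * real n" using a by (simp add: divide_less_eq)
          then have "real (rfun n x) * (y - 1) < y * real n" unfolding c_def using y1
            by (simp add: field_simps)
          then show "n \<ge> 1 \<and> y * (real (rfun n x) - real n) < real (rfun n x)" using a
            by (simp add: algebra_simps)
        qed
        then show ?thesis using mem[of y] y1 real by simp
      qed
    qed
  qed
qed


end
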